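(* Let $\mathbb{R}^n_s$ be $\mathbb{R}^n$ with a non-degenerate symmetric bilinear form of signature $(n-s,s)$, and let $G\subset\mathrm{Iso}(\mathbb{R}^n_s)$ be a real Zariski-closed subgroup of dimension $k$ whose centralizer in $\mathrm{Iso}(\mathbb{R}^n_s)$ acts transitively on $\mathbb{R}^n$. Let $\mathfrak{g}$ be the Lie algebra of $G$ and let $X_1,\dots,X_k$ be a Malcev basis of $\mathfrak{g}$, with $X_i=(A_i,v_i)$. For $p\in\mathbb{R}^n$ put $b_i(p)=A_ip+v_i$. Then the orbit $F_p=G.p$ is the affine subspace $$F_p=p+\mathrm{span}\{b_1(p),\dots,b_k(p)\}$$ and $\dim F_p=k$.
   Context: Affine maps of $\mathbb{R}^n$ are written $(I+A,v)$ (linear part $I+A$, translation $v$), identified with the matrix $\begin{pmatrix}I+A&v\\0&1\end{pmatrix}\in\mathrm{GL}_{n+1}(\mathbb{R})$; elements of $\mathfrak{g}$ are written $(A,v)$, identified with $\begin{pmatrix}A&v\\0&0\end{pmatrix}$. $G$ is a unipotent group. A Malcev basis of $\mathfrak{g}$ is a basis $X_1,\dots,X_k$ such that every $g\in G$ can be written uniquely as $g=\exp(t_1X_1+\dots+t_kX_k)$ with real $t_1,\dots,t_k$. *)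

theory Defs
  imports "HOL-Analysis.Analysis"
begin

text \<open>Affine maps and elements of the
Lie algebra are identified with (n+1)x(n+1) matrices indexed by 'n option, where the index
None plays the role of the extra (last) coordinate.\<close>

type_synonym ('n) augmat = "real^('n option)^('n option)"

definition aff_mat :: "real^'n^'n \<Rightarrow> real^'n \<Rightarrow> ('n::finite) augmat" where
  "aff_mat M v = (\<chi> i j. case i of
      Some a \<Rightarrow> (case j of Some b \<Rightarrow> M$a$b | None \<Rightarrow> v$a)
    | None \<Rightarrow> (case j of Some b \<Rightarrow> 0 | None \<Rightarrow> 1))"

definition lie_mat :: "real^'n^'n \<Rightarrow> real^'n \<Rightarrow> ('n::finite) augmat" where
  "lie_mat A v = (\<chi> i j. case i of
      Some a \<Rightarrow> (case j of Some b \<Rightarrow> A$a$b | None \<Rightarrow> v$a)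
    | None \<Rightarrow> 0)"

definition ext_pt :: "real^'n \<Rightarrow> real^('n option)" where
  "ext_pt p = (\<chi> i. case i of Some a \<Rightarrow> p$a | None \<Rightarrow> 1)"

definition act :: "('n::finite) augmat \<Rightarrow> real^'n \<Rightarrow> real^'n" where
  "act g p = (\<chi> a. (g *v ext_pt p) $ Some a)"

definition has_signature :: "real^'n^'n \<Rightarrow> nat \<Rightarrow> bool" where
  "has_signature B s \<longleftrightarrow> transpose B = B \<and>
     (\<exists>(P::real^'n^'n) d. invertible P \<and> (\<forall>i. d i = 1 \<or> d i = -1) \<and> card {i. d i = -1} = s \<and>
            transpose P ** B ** P = (\<chi> i j. if i = j then d i else 0))"

definition iso_group :: "real^'n^'n \<Rightarrow> ('n::finite) augmat set" where
  "iso_group B = {aff_mat M v | M v. transpose M ** B ** M = B}"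

fun matpow :: "('n::finite) augmat \<Rightarrow> nat \<Rightarrow> ('n::finite) augmat" where
  "matpow X 0 = mat 1"
| "matpow X (Suc m) = X ** matpow X m"

definition mexp :: "('n::finite) augmat \<Rightarrow> ('n::finite) augmat" where
  "mexp X = (\<chi> i j. \<Sum>m. (matpow X m)$i$j / fact m)"

definition is_subgroup :: "('n::finite) augmat set \<Rightarrow> bool" where
  "is_subgroup G \<longleftrightarrow> mat 1 \<in> G \<and> (\<forall>g\<in>G. \<forall>h\<in>G. g ** h \<in> G) \<and>
     (\<forall>g\<in>G. invertible g \<and> matrix_inv g \<in> G)"

inductive_set poly_fun :: "(real^'i^'j \<Rightarrow> real) set" where
  const: "(\<lambda>M. c) \<in> poly_fun"
| coord: "(\<lambda>M. M$j$i) \<in> poly_fun"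
| add: "f \<in> poly_fun \<Longrightarrow> g \<in> poly_fun \<Longrightarrow> (\<lambda>M. f M + g M) \<in> poly_fun"
| mult: "f \<in> poly_fun \<Longrightarrow> g \<in> poly_fun \<Longrightarrow> (\<lambda>M. f M * g M) \<in> poly_fun"

definition zariski_closed :: "(real^'i^'j) set \<Rightarrow> bool" where
  "zariski_closed S \<longleftrightarrow> (\<exists>P \<subseteq> poly_fun. S = {M. \<forall>f\<in>P. f M = 0})"

definition unipotent_group :: "('n::finite) augmat set \<Rightarrow> bool" where
  "unipotent_group G \<longleftrightarrow> (\<forall>g\<in>G. matpow (g - mat 1) CARD('n option) = 0)"

definition lie_algebra :: "('n::finite) augmat set \<Rightarrow> ('n::finite) augmat set" where
  "lie_algebra G = {X. \<forall>t::real. mexp (t *\<^sub>R X) \<in> G}"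

definition malcev_basis :: "('n::finite) augmat set \<Rightarrow> ('n::finite) augmat list \<Rightarrow> bool" where
  "malcev_basis G Xs \<longleftrightarrow> distinct Xs \<and> independent (set Xs) \<and>
     span (set Xs) = lie_algebra G \<and>
     (\<forall>g\<in>G. \<exists>!ts::real list. length ts = length Xs \<and>
        g = mexp (\<Sum>i<length Xs. (ts!i) *\<^sub>R (Xs!i)))"

definition orbit :: "('n::finite) augmat set \<Rightarrow> real^'n \<Rightarrow> (real^'n) set" where
  "orbit G p = (\<lambda>g. act g p) ` G"

end

theory Submission
  imports Defs
begin


lemma sum_option_UNIV: "(\<Sum>x\<in>(UNIV::'a::finite option set). f x) = f None + (\<Sum>a\<in>UNIV. f (Some a))"
proof -
  have "(\<Sum>x\<in>(UNIV::'a option set). f x) = (\<Sum>x\<in>insert None (range Some). f x)"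
    by (simp add: UNIV_option_conv)
  also have "\<dots> = f None + (\<Sum>x\<in>range Some. f x)"
    by (subst sum.insert) auto
  also have "(\<Sum>x\<in>range Some. f x) = (\<Sum>a\<in>UNIV. f (Some a))"
    by (subst sum.reindex) (auto simp: inj_on_def)
  finally show ?thesis .
qed

lemma aff_mat_ext: "aff_mat M u *v ext_pt x = ext_pt (M *v x + u)"
  by (auto simp: vec_eq_iff aff_mat_def ext_pt_def matrix_vector_mult_def sum_option_UNIV split: option.splits)

lemma act_aff: "act (aff_mat M u) x = M *v x + u"
  unfolding act_def aff_mat_ext by (simp add: ext_pt_def vec_eq_iff)

lemma act_mult: "act (c ** aff_mat M u) x = act c (act (aff_mat M u) x)"
  by (simp only: act_aff) (simp add: act_def matrix_vector_mul_assoc[symmetric] aff_mat_ext)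

lemma lie_mat_mult: "lie_mat A v ** lie_mat A' v' = lie_mat (A ** A') (A *v v')"
  by (auto simp: vec_eq_iff lie_mat_def matrix_matrix_mult_def matrix_vector_mult_def sum_option_UNIV split: option.splits)

lemma aff_minus: "aff_mat M u - mat 1 = lie_mat (M - mat 1) u"
  by (auto simp: vec_eq_iff lie_mat_def aff_mat_def mat_def split: option.splits)

lemma aff_one: "aff_mat (mat 1) 0 = mat 1"
  by (auto simp: vec_eq_iff aff_mat_def mat_def split: option.splits)

lemma act_one_plus: "act (mat 1 + lie_mat A v) p = p + (A *v p + v)"
  by (auto simp: vec_eq_iff act_def lie_mat_def ext_pt_def matrix_vector_mult_def sum_option_UNIV
     matrix_add_ldistrib mat_def distrib_right sum.distrib split: option.splits)
    (simp add: if_distrib[where f="\<lambda>x. x * _"] cong: if_cong)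



lemma B_inj:
  assumes "has_signature B s" "B *v y = 0" shows "y = 0"
proof -
  obtain P :: "real^'a^'a" and d where P: "invertible P" and d: "\<forall>i. d i = 1 \<or> d i = -1"
    and D: "transpose P ** B ** P = (\<chi> i j. if i = j then d i else 0)"
    using assms(1) unfolding has_signature_def by blast
  obtain P' where P': "P ** P' = mat 1" using P invertible_right_inverse by blast
  define z where "z = P' *v y"
  have Pz: "P *v z = y" by (simp add: z_def matrix_vector_mul_assoc P')
  have "(\<chi> i j. if i = j then d i else 0) *v z = 0"
    by (metis D Pz assms(2) matrix_vector_mul_assoc matrix_vector_mult_0_right)
  hence "\<forall>i. d i * z $ i = 0"
    by (auto simp: vec_eq_iff matrix_vector_mult_def if_distrib[where f="\<lambda>x. x * _"] cong: if_cong)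
  hence "z = 0" using d by (metis mult_eq_0_iff vec_eq_iff zero_index zero_neq_neg_one zero_neq_one)
  thus ?thesis using Pz by simp
qed

lemma mvm_minus: "(A::real^'n^'m) *v (- x) = - (A *v x)"
  by (simp add: vec_eq_iff matrix_vector_mult_def sum_negf)

lemma beta_sym:
  fixes B :: "real^'n^'n" assumes "transpose B = B" shows "x \<bullet> (B *v y) = y \<bullet> (B *v x)"
  by (metis assms dot_lmul_matrix inner_commute vector_transpose_matrix)

lemma beta_iso:
  fixes B :: "real^'n^'n" assumes "transpose M ** B ** M = B"
  shows "(M *v x) \<bullet> (B *v (M *v y)) = x \<bullet> (B *v y)"
proof -
  have "(M *v x) \<bullet> (B *v (M *v y)) = x \<bullet> (transpose M *v (B *v (M *v y)))"
    by (metis dot_lmul_matrix inner_commute vector_transpose_matrix)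
  also have "\<dots> = x \<bullet> ((transpose M ** B ** M) *v y)" by (simp add: matrix_vector_mul_assoc matrix_mul_assoc)
  finally show ?thesis using assms by simp
qed

lemma key_alg:
  fixes B M :: "real^'n^'n"
  assumes sym: "transpose B = B" and inj: "\<And>y. B *v y = 0 \<Longrightarrow> y = 0"
    and iso: "transpose M ** B ** M = B"
    and const: "\<And>q. ((M - mat 1) *v q + u) \<bullet> (B *v ((M - mat 1) *v q + u)) = u \<bullet> (B *v u)"
  shows "(M - mat 1) ** (M - mat 1) = 0" "(M - mat 1) *v u = 0"
proof -
  define A where "A = M - mat 1"
  define \<beta> where "\<beta> x y = x \<bullet> (B *v y)" for x y
  have bs: "\<beta> x y = \<beta> y x" for x y using beta_sym[OF sym] by (simp add: \<beta>_def)
  have bl: "\<beta> (x + y) z = \<beta> x z + \<beta> y z" "\<beta> z (x + y) = \<beta> z x + \<beta> z y"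
     "\<beta> (c *\<^sub>R x) z = c * \<beta> x z" "\<beta> z (c *\<^sub>R x) = c * \<beta> z x"
     "\<beta> (- x) z = - \<beta> x z" "\<beta> z (- x) = - \<beta> z x" for x y z c
    by (simp_all add: \<beta>_def inner_add_left matrix_vector_right_distrib inner_add_right
        matrix_vector_mult_scaleR mvm_minus)
  have c: "\<beta> (A *v q + u) (A *v q + u) = \<beta> u u" for q using const[of q] by (simp add: A_def \<beta>_def)
  have c2: "\<beta> (A *v q) (A *v q) + 2 * \<beta> u (A *v q) = 0" for q
    using c[of q] by (simp add: bl bs[of "A *v q" u])
  have c3: "\<beta> (A *v q) (A *v q) - 2 * \<beta> u (A *v q) = 0" for q
    using c2[of "-q"] by (simp add: mvm_minus bl)
  have iso0: "\<beta> (A *v x) (A *v y) = 0" for x y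
  proof -
    have "\<beta> (A *v (x+y)) (A *v (x+y)) = 0" "\<beta> (A *v x) (A *v x) = 0" "\<beta> (A *v y) (A *v y) = 0"
      using c2[of "x+y"] c3[of "x+y"] c2[of x] c3[of x] c2[of y] c3[of y] by linarith+
    thus ?thesis by (simp add: matrix_vector_right_distrib bl bs[of "A *v y" "A *v x"])
  qed
  have uA: "\<beta> u (A *v q) = 0" for q using c2[of q] c3[of q] by linarith
  have skew: "\<beta> x (A *v y) + \<beta> (A *v x) y = 0" for x y
  proof -
    have "\<beta> (M *v x) (M *v y) = \<beta> x y" using beta_iso[OF iso] by (simp add: \<beta>_def)
    moreover have "M = mat 1 + A" by (simp add: A_def)
    ultimately have "\<beta> (x + A *v x) (y + A *v y) = \<beta> x y" by (simp add: matrix_vector_mult_add_rdistrib)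
    thus ?thesis using iso0[of x y] by (simp add: bl)
  qed
  have "A *v (A *v y) = 0" for y
  proof -
    have "\<beta> x (A *v (A *v y)) = 0" for x using skew[of x "A *v y"] iso0[of x y] by simp
    hence "(B *v (A *v (A *v y))) \<bullet> (B *v (A *v (A *v y))) = 0" by (simp add: \<beta>_def)
    thus ?thesis using inj by simp
  qed
  thus "(M - mat 1) ** (M - mat 1) = 0" unfolding A_def[symmetric]
    by (simp add: matrix_eq matrix_vector_mul_assoc[symmetric])
  have "\<beta> x (A *v u) = 0" for x using skew[of x u] uA[of x] bs[of u "A *v x"] by simp
  hence "(B *v (A *v u)) \<bullet> (B *v (A *v u)) = 0" by (simp add: \<beta>_def)
  thus "(M - mat 1) *v u = 0" using inj by (simp add: A_def)
qed



lemma mat_scale_right: "(X::real^'n^'n) ** (c *\<^sub>R P) = c *\<^sub>R (X ** P)"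
  by (simp add: vec_eq_iff matrix_matrix_mult_def sum_distrib_left mult_ac)

lemma matpow_scale: "matpow (t *\<^sub>R X) m = t^m *\<^sub>R matpow X m"
  by (induction m) (simp_all add: mat_scale_right scalar_matrix_assoc[symmetric])

definition rowK :: "('n::finite) augmat \<Rightarrow> real" where
  "rowK X = (\<Sum>i\<in>UNIV. \<Sum>k\<in>UNIV. \<bar>X$i$k\<bar>) + 1"

lemma rowK_ge: "(\<Sum>k\<in>UNIV. \<bar>X$i$k\<bar>) \<le> rowK X" "rowK X \<ge> 1"
proof -
  have "(\<Sum>k\<in>UNIV. \<bar>X$i$k\<bar>) \<le> (\<Sum>i\<in>UNIV. \<Sum>k\<in>UNIV. \<bar>X$i$k\<bar>)"
    by (rule member_le_sum) (auto intro: sum_nonneg)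
  thus "(\<Sum>k\<in>UNIV. \<bar>X$i$k\<bar>) \<le> rowK X" by (simp add: rowK_def)
  have "0 \<le> (\<Sum>i\<in>UNIV. \<Sum>k\<in>UNIV. \<bar>X$i$k\<bar>)" by (auto intro: sum_nonneg)
  thus "rowK X \<ge> 1" by (simp add: rowK_def)
qed

lemma matpow_bound: "\<bar>matpow X m $ i $ j\<bar> \<le> rowK X ^ m"
proof (induction m arbitrary: i j)
  case 0 thus ?case by (simp add: mat_def)
next
  case (Suc m)
  have "\<bar>matpow X (Suc m) $ i $ j\<bar> = \<bar>\<Sum>k\<in>UNIV. X$i$k * matpow X m $ k $ j\<bar>"
    by (simp add: matrix_matrix_mult_def)
  also have "\<dots> \<le> (\<Sum>k\<in>UNIV. \<bar>X$i$k\<bar> * rowK X ^ m)"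
    by (rule order_trans[OF sum_abs]) (auto intro!: sum_mono mult_left_mono Suc simp: abs_mult)
  also have "\<dots> = (\<Sum>k\<in>UNIV. \<bar>X$i$k\<bar>) * rowK X ^ m" by (simp add: sum_distrib_right)
  also have "\<dots> \<le> rowK X * rowK X ^ m"
    using rowK_ge(1)[of X i] rowK_ge(2)[of X] by (intro mult_right_mono) auto
  finally show ?case by simp
qed

lemma summ_shift: "summable (\<lambda>m. (matpow X (Suc m) $i$j / fact (Suc m)) * y^m)"
proof -
  let ?K = "rowK X"
  have K: "?K \<ge> 1" by (rule rowK_ge(2))
  have s: "summable (\<lambda>m. ?K * (inverse (fact m) * (?K * \<bar>y\<bar>)^m))"
    by (intro summable_mult summable_exp)
  show ?thesis
  proof (rule summable_comparison_test'[OF s, where N=0])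
    fix m :: nat assume "m \<ge> 0"
    have "norm ((matpow X (Suc m) $i$j / fact (Suc m)) * y^m)
        = \<bar>matpow X (Suc m) $i$j\<bar> / fact (Suc m) * \<bar>y\<bar>^m"
      by (simp add: abs_mult power_abs)
    also have "\<dots> \<le> ?K ^ Suc m / fact m * \<bar>y\<bar>^m"
    proof (intro mult_right_mono frac_le)
      show "\<bar>matpow X (Suc m) $i$j\<bar> \<le> ?K ^ Suc m" by (rule matpow_bound)
      show "(fact m :: real) \<le> fact (Suc m)" by (rule fact_mono) simp
    qed (use K in \<open>auto intro!: mult_nonneg_nonneg\<close>)
    also have "\<dots> = ?K * (inverse (fact m) * (?K * \<bar>y\<bar>)^m)"
      by (simp add: power_mult_distrib field_simps)
    finally show "norm ((matpow X (Suc m) $i$j / fact (Suc m)) * y^m) \<le> ?K * (inverse (fact m) * (?K * \<bar>y\<bar>)^m)" .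
  qed
qed

definition F :: "('n::finite) augmat \<Rightarrow> 'n option \<Rightarrow> 'n option \<Rightarrow> real \<Rightarrow> real" where
  "F X i j t = (\<Sum>m. (matpow X (Suc m) $i$j / fact (Suc m)) * t^m)"

lemma mexp_minus: "(mexp (t *\<^sub>R X) - mat 1) $ i $ j = t * F X i j t"
proof -
  define g where "g m = t^m * matpow X m $i$j / fact m" for m
  have gs: "g (Suc m) = t * ((matpow X (Suc m) $i$j / fact (Suc m)) * t^m)" for m
    by (simp add: g_def)
  have "summable (\<lambda>m. g (Suc m))" unfolding gs by (intro summable_mult summ_shift)
  hence sg: "summable g" by (simp add: summable_Suc_iff)
  have "mexp (t *\<^sub>R X) $ i $ j = suminf g"
    by (simp add: mexp_def matpow_scale g_def[abs_def])
  also have "\<dots> = g 0 + (\<Sum>m. g (Suc m))" using suminf_split_head[OF sg] by simp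
  also have "(\<Sum>m. g (Suc m)) = t * F X i j t"
    unfolding gs F_def by (rule suminf_mult[OF summ_shift])
  finally show ?thesis by (simp add: g_def)
qed

lemma F_tendsto: "(F X i j \<longlongrightarrow> X $ i $ j) (at 0)"
proof -
  have "isCont (F X i j) 0"
    unfolding F_def[abs_def] by (rule isCont_powser_converges_everywhere[OF summ_shift])
  moreover have "F X i j 0 = X $ i $ j" unfolding F_def powser_zero by simp
  ultimately show ?thesis by (simp add: isCont_def)
qed

lemma lie_sq_zero:
  assumes sq: "\<And>g. g \<in> G \<Longrightarrow> (g - mat 1) ** (g - mat 1) = 0"
    and X: "X \<in> lie_algebra G"
  shows "X ** X = (0::('n::finite) augmat)"
proof -
  have "(X ** X) $ i $ j = 0" for i j
  proof -
    let ?h = "\<lambda>t. \<Sum>k\<in>UNIV. F X i k t * F X k j t"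
    have lim: "(?h \<longlongrightarrow> (X ** X) $ i $ j) (at 0)"
      unfolding matrix_matrix_mult_def by (simp, intro tendsto_intros F_tendsto)
    have h0: "?h t = 0" if t: "t \<noteq> 0" for t :: real
    proof -
      have "mexp (t *\<^sub>R X) \<in> G" using X by (simp add: lie_algebra_def)
      hence "((mexp (t *\<^sub>R X) - mat 1) ** (mexp (t *\<^sub>R X) - mat 1)) $ i $ j = 0" using sq by simp
      hence "(\<Sum>k\<in>UNIV. (t * F X i k t) * (t * F X k j t)) = 0"
        by (simp add: matrix_matrix_mult_def mexp_minus del: vector_minus_component)
      hence "t^2 * ?h t = 0" by (simp add: sum_distrib_left power2_eq_square mult_ac)
      thus "?h t = 0" using t by simp
    qed
    have ev: "\<forall>\<^sub>F t in at 0. ?h t = 0"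
      unfolding eventually_at_filter by (auto intro!: always_eventually h0)
    have "((\<lambda>t::real. 0::real) \<longlongrightarrow> (X ** X) $ i $ j) (at 0)"
      by (rule Lim_transform_eventually[where g="\<lambda>t. 0", OF lim ev])
    thus ?thesis by (simp add: tendsto_const_iff)
  qed
  thus ?thesis by (simp add: vec_eq_iff)
qed

lemma mexp_sq0: assumes "X ** X = 0" shows "mexp X = mat 1 + X"
proof -
  have mp: "matpow X (Suc (Suc m)) = 0" for m
    by (induction m) (simp_all add: assms matrix_mul_assoc[symmetric])
  have "mexp X $ i $ j = (mat 1 + X) $ i $ j" for i j
  proof -
    have "(\<Sum>m. matpow X m $i$j / fact m) = (\<Sum>m\<in>{0,1}. matpow X m $i$j / fact m)"
    proof (rule suminf_finite)
      fix m :: nat assume "m \<notin> {0,1}"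
      hence "m = Suc (Suc (m - 2))" by auto
      thus "matpow X m $i$j / fact m = 0" by (metis mp zero_index divide_eq_0_iff)
    qed simp
    thus ?thesis by (simp add: mexp_def)
  qed
  thus ?thesis by (simp add: vec_eq_iff)
qed



definition evp :: "real^'n \<Rightarrow> ('n::finite) augmat \<Rightarrow> real^'n" where
  "evp p Y = (\<chi> a. (Y *v ext_pt p) $ Some a)"

lemma evp_linear: "linear (evp p)"
  by (rule linearI) (simp_all add: evp_def vec_eq_iff matrix_vector_mult_add_rdistrib
      scaleR_matrix_vector_assoc[symmetric])

lemma evp_lie: "evp p (lie_mat A v) = A *v p + v"
  using act_one_plus[of A v p] 
  by (auto simp: vec_eq_iff evp_def act_def lie_mat_def ext_pt_def matrix_vector_mult_def sum_option_UNIV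
      split: option.splits)

lemma act_one_plus_gen: "act (mat 1 + Y) p = p + evp p Y"
  by (simp add: act_def evp_def vec_eq_iff matrix_vector_mult_add_rdistrib ext_pt_def)

lemma lie_mat_00: "lie_mat 0 0 = 0"
  by (auto simp: vec_eq_iff lie_mat_def split: option.splits)

theorem proposition4p1:
  fixes B :: "real^'n^'n" and s k :: nat
    and G :: "'n augmat set"
    and Xs :: "((real^'n^'n) \<times> (real^'n)) list"
    and p :: "real^'n"
  assumes "s \<le> CARD('n)"
    and "has_signature B s"
    and "G \<subseteq> iso_group B" and "is_subgroup G" and "zariski_closed G"
    and "unipotent_group G"
    and "dim (lie_algebra G) = k"
    and "\<forall>q r. \<exists>c\<in>iso_group B. (\<forall>g\<in>G. c ** g = g ** c) \<and> act c q = r"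
    and "length Xs = k"
    and "malcev_basis G (map (\<lambda>(A, v). lie_mat A v) Xs)"
  shows "orbit G p = (\<lambda>w. p + w) ` span ((\<lambda>(A, v). A *v p + v) ` set Xs)
     \<and> aff_dim (orbit G p) = int k"
proof -
  note sig = assms(2) and GI = assms(3) and trans = assms(8) and mal = assms(10)
  have symB: "transpose B = B" using sig by (simp add: has_signature_def)
  have injB: "\<And>y. B *v y = 0 \<Longrightarrow> y = 0" using B_inj[OF sig] by blast
  have sq: "(g - mat 1) ** (g - mat 1) = 0" if g: "g \<in> G" for g
  proof -
    obtain M u where gM: "g = aff_mat M u" and iso: "transpose M ** B ** M = B"
      using g GI by (auto simp: iso_group_def)
    have const: "((M - mat 1) *v q + u) \<bullet> (B *v ((M - mat 1) *v q + u)) = u \<bullet> (B *v u)" for q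
    proof -
      obtain c where c: "c \<in> iso_group B" "\<forall>g\<in>G. c ** g = g ** c" "act c 0 = q"
        using trans by blast
      obtain N w where cN: "c = aff_mat N w" and isoN: "transpose N ** B ** N = B"
        using c(1) by (auto simp: iso_group_def)
      have "act g q = act (g ** c) 0" using c(3) cN by (simp add: act_mult)
      also have "\<dots> = act (c ** g) 0" using c(2) g by simp
      also have "\<dots> = N *v u + w" using gM cN by (simp add: act_mult act_aff)
      finally have e1: "M *v q + u = N *v u + w" using gM by (simp add: act_aff)
      have "q = w" using c(3) cN by (simp add: act_aff)
      with e1 have "(M - mat 1) *v q + u = N *v u"
        by (simp add: matrix_vector_mult_diff_rdistrib algebra_simps)
      thus ?thesis using beta_iso[OF isoN, of u u] by simp
    qed
    have "(M - mat 1) ** (M - mat 1) = 0" "(M - mat 1) *v u = 0"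
      using key_alg[OF symB injB iso const] by auto
    thus ?thesis by (simp add: gM aff_minus lie_mat_mult lie_mat_00)
  qed
  have mexpL: "mexp X = mat 1 + X" if "X \<in> lie_algebra G" for X
    using mexp_sq0[OF lie_sq_zero[OF sq that]] .
  define Ys where "Ys = map (\<lambda>(A, v). lie_mat A v) Xs"
  have L: "lie_algebra G = span (set Ys)" using mal by (simp add: malcev_basis_def Ys_def)
  have expG: "mexp X \<in> G" if "X \<in> lie_algebra G" for X
  proof -
    have "mexp (1 *\<^sub>R X) \<in> G" using that unfolding lie_algebra_def by (rule CollectE) (erule allE)
    thus ?thesis by simp
  qed
  have orb: "orbit G p = (\<lambda>X. p + evp p X) ` span (set Ys)"
  proof
    show "orbit G p \<subseteq> (\<lambda>X. p + evp p X) ` span (set Ys)"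
    proof
      fix r assume "r \<in> orbit G p"
      then obtain g where g: "g \<in> G" "r = act g p" by (auto simp: orbit_def)
      then obtain ts :: "real list" where ts: "g = mexp (\<Sum>i<length Ys. (ts!i) *\<^sub>R (Ys!i))"
        using mal unfolding malcev_basis_def Ys_def by blast
      define X where "X = (\<Sum>i<length Ys. (ts!i) *\<^sub>R (Ys!i))"
      have XS: "X \<in> span (set Ys)" unfolding X_def
        by (intro span_sum span_scale span_base) simp
      hence "g = mat 1 + X" using ts mexpL L by (simp add: X_def)
      hence "r = p + evp p X" using g by (simp add: act_one_plus_gen)
      thus "r \<in> (\<lambda>X. p + evp p X) ` span (set Ys)" using XS by blast
    qed
    show "(\<lambda>X. p + evp p X) ` span (set Ys) \<subseteq> orbit G p"
    proof
      fix r assume "r \<in> (\<lambda>X. p + evp p X) ` span (set Ys)"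
      then obtain X where X: "X \<in> span (set Ys)" "r = p + evp p X" by blast
      have "mexp X \<in> G" "mexp X = mat 1 + X" using X(1) L expG mexpL by auto
      thus "r \<in> orbit G p" using X(2) by (auto simp: orbit_def act_one_plus_gen intro!: image_eqI)
    qed
  qed
  have imgY: "evp p ` set Ys = (\<lambda>(A, v). A *v p + v) ` set Xs"
    by (auto simp: Ys_def image_image evp_lie split: prod.splits intro!: image_cong)
  have spanimg: "span (evp p ` set Ys) = evp p ` span (set Ys)"
    using span_linear_image[OF evp_linear] by blast
  have part1: "orbit G p = (\<lambda>w. p + w) ` span ((\<lambda>(A, v). A *v p + v) ` set Xs)"
    unfolding orb imgY[symmetric] spanimg by (simp add: image_image)
  have ker: "Z = 0" if Z: "Z \<in> span (set Ys)" "evp p Z = 0" for Z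
  proof -
    define g where "g = mat 1 + Z"
    have gG: "g \<in> G" using Z(1) L expG mexpL g_def by auto
    have gp: "act g p = p" using Z(2) by (simp add: g_def act_one_plus_gen)
    obtain M u where gM: "g = aff_mat M u" using gG GI by (auto simp: iso_group_def)
    have fix_all: "M *v q + u = q" for q
    proof -
      obtain c where c: "c \<in> iso_group B" "\<forall>g\<in>G. c ** g = g ** c" "act c p = q"
        using trans by blast
      obtain N w where cN: "c = aff_mat N w" using c(1) by (auto simp: iso_group_def)
      have "act g q = act (g ** c) p" using c(3) cN by (simp add: act_mult)
      also have "\<dots> = act (c ** g) p" using c(2) gG by simp
      also have "\<dots> = q" using gM gp c(3) by (simp add: act_mult)
      finally show ?thesis using gM by (simp add: act_aff)
    qed
    have u0: "u = 0" using fix_all[of 0] by simp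
    have "M = mat 1" using fix_all u0 by (simp add: matrix_eq)
    hence "g = mat 1" using gM u0 aff_one by simp
    thus ?thesis by (simp add: g_def)
  qed
  have inj: "inj_on (evp p) (span (set Ys))"
  proof (rule inj_onI)
    fix X Y assume XY: "X \<in> span (set Ys)" "Y \<in> span (set Ys)" "evp p X = evp p Y"
    have "evp p (X - Y) = evp p X - evp p Y" using evp_linear by (rule linear_diff)
    hence "evp p (X - Y) = 0" using XY(3) by simp
    moreover have "X - Y \<in> span (set Ys)" using XY by (simp add: span_diff)
    ultimately show "X = Y" using ker by fastforce
  qed
  have "dim (evp p ` set Ys) = dim (set Ys)"
    by (rule dim_image_eq[OF evp_linear inj])
  hence dimS: "dim (span ((\<lambda>(A, v). A *v p + v) ` set Xs)) = k"
    using assms(7) L imgY by simp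
  have "aff_dim (orbit G p) = aff_dim (span ((\<lambda>(A, v). A *v p + v) ` set Xs))"
    unfolding part1 using aff_dim_translation_eq[of p "span ((\<lambda>(A, v). A *v p + v) ` set Xs)"]
    by simp
  also have "\<dots> = int k" using dimS by (simp add: aff_dim_subspace)
  finally show ?thesis using part1 by simp
qed

end
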